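(* Let $P$ be a finite set of points in $\mathbb{R}^2$ in general position, and let $u,v$ be adjacent vertices of the convex hull of $P$. Then $|A(u)\cap A(v)|\le 1$.
   Context: Convex layers: $L^1$ is the set of vertices of the convex hull of $P$, $L^2$ the set of vertices of the convex hull of $P\setminus L^1$. A point $p$ is active for a hull point $u\in L^1$ if, upon deleting $u$ from $P$ and recomputing the first and second convex layers, $p$ moves to the first layer; $A(u)$ denotes the set of points active for $u$. *)

theory Defs
  imports "HOL-Analysis.Analysis"
begin

definition hull_vertices :: "(real^2) set \<Rightarrow> (real^2) set" where
  "hull_vertices P = {p \<in> P. p \<notin> convex hull (P - {p})}"

definition layer1 :: "(real^2) set \<Rightarrow> (real^2) set" where
  "layer1 P = hull_vertices P"

definition layer2 :: "(real^2) set \<Rightarrow> (real^2) set" where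
  "layer2 P = hull_vertices (P - layer1 P)"

definition active :: "(real^2) set \<Rightarrow> real^2 \<Rightarrow> (real^2) set" where
  "active P u = {p \<in> layer2 P. p \<in> layer1 (P - {u})}"

definition general_position :: "(real^2) set \<Rightarrow> bool" where
  "general_position P \<longleftrightarrow>
     (\<forall>a\<in>P. \<forall>b\<in>P. \<forall>c\<in>P. a \<noteq> b \<and> a \<noteq> c \<and> b \<noteq> c \<longrightarrow> \<not> collinear {a, b, c})"

definition adjacent_hull_vertices :: "(real^2) set \<Rightarrow> real^2 \<Rightarrow> real^2 \<Rightarrow> bool" where
  "adjacent_hull_vertices P u v \<longleftrightarrow>
     u \<in> layer1 P \<and> v \<in> layer1 P \<and> u \<noteq> v \<and> closed_segment u v face_of convex hull P"

end

theory Submission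
  imports Defs
begin

lemma exch:
  fixes a b c p q :: "'a::real_vector"
  assumes p: "p = l1 *\<^sub>R a + l2 *\<^sub>R b + l3 *\<^sub>R c" and q: "q = m1 *\<^sub>R a + m2 *\<^sub>R b + m3 *\<^sub>R c"
    and "l1 \<ge> 0" "l2 \<ge> 0" "l3 \<ge> 0" "l1 + l2 + l3 = 1"
    and "m1 > 0" "m2 \<ge> 0" "m3 \<ge> 0" "m1 + m2 + m3 = 1"
    and r2: "l1 * m2 \<le> l2 * m1" and r3: "l1 * m3 \<le> l3 * m1"
  shows "p \<in> convex hull {q, b, c}"
proof -
  define t where "t = l1 / m1"
  have t0: "t \<ge> 0" using assms by (simp add: t_def)
  have e2: "l2 - t * m2 \<ge> 0" using r2 \<open>m1 > 0\<close> by (simp add: t_def field_simps)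
  have e3: "l3 - t * m3 \<ge> 0" using r3 \<open>m1 > 0\<close> by (simp add: t_def field_simps)
  have tm: "t * m1 = l1" using \<open>m1 > 0\<close> by (simp add: t_def)
  have s: "t + (l2 - t * m2) + (l3 - t * m3) = 1"
  proof -
    have "t = t * m1 + t * m2 + t * m3" using \<open>m1 + m2 + m3 = 1\<close> by (metis mult_1_right distrib_left)
    then show ?thesis using tm \<open>l1 + l2 + l3 = 1\<close> by linarith
  qed
  have "p = t *\<^sub>R q + (l2 - t * m2) *\<^sub>R b + (l3 - t * m3) *\<^sub>R c"
    unfolding p q using tm by (simp add: algebra_simps scaleR_add_right)
  then show ?thesis unfolding convex_hull_3 using t0 e2 e3 s by blast
qed

lemma rtrans:
  fixes a b c mi mj mk :: real
  assumes "mj > 0" "mi \<ge> 0" "mk \<ge> 0" "a * mj \<le> b * mi" "b * mk \<le> c * mj"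
  shows "a * mk \<le> c * mi"
proof -
  have "a * mk * mj \<le> b * mi * mk" using mult_right_mono[OF assms(4) assms(3)] by (simp add: algebra_simps)
  also have "\<dots> \<le> c * mj * mi" using mult_right_mono[OF assms(5) assms(2)] by (simp add: algebra_simps)
  finally have "(a * mk) * mj \<le> (c * mi) * mj" by (simp add: algebra_simps)
  then show ?thesis using assms(1) by simp
qed

lemma ratio_cases:
  fixes l1 l2 l3 m1 m2 m3 :: real
  assumes "l1 \<ge> 0" "l2 \<ge> 0" "l3 \<ge> 0" "m1 \<ge> 0" "m2 \<ge> 0" "m3 \<ge> 0" "m1 + m2 + m3 = 1"
  shows "(m1 > 0 \<and> l1 * m2 \<le> l2 * m1 \<and> l1 * m3 \<le> l3 * m1) \<or>
         (m2 > 0 \<and> l2 * m1 \<le> l1 * m2 \<and> l2 * m3 \<le> l3 * m2) \<or>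
         (m3 > 0 \<and> l3 * m1 \<le> l1 * m3 \<and> l3 * m2 \<le> l2 * m3)"
proof -
  note tr = rtrans[of m1 m2 m3] rtrans[of m1 m3 m2] rtrans[of m2 m1 m3] rtrans[of m2 m3 m1]
     rtrans[of m3 m1 m2] rtrans[of m3 m2 m1]
  have z: "m1 = 0 \<Longrightarrow> l2 * m1 \<le> l1 * m2 \<and> l3 * m1 \<le> l1 * m3"
          "m2 = 0 \<Longrightarrow> l1 * m2 \<le> l2 * m1 \<and> l3 * m2 \<le> l2 * m3"
          "m3 = 0 \<Longrightarrow> l1 * m3 \<le> l3 * m1 \<and> l2 * m3 \<le> l3 * m2"
    using assms by auto
  show ?thesis using tr z assms
    by (smt (verit))
qed


lemma subdiv:
  fixes a b c p q :: "'a::real_vector"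
  assumes p: "p \<in> convex hull {a, b, c}"
    and q: "q = m1 *\<^sub>R a + m2 *\<^sub>R b + m3 *\<^sub>R c" "m1 \<ge> 0" "m2 \<ge> 0" "m3 \<ge> 0" "m1 + m2 + m3 = 1"
  shows "(m1 > 0 \<and> p \<in> convex hull {q, b, c}) \<or> (m2 > 0 \<and> p \<in> convex hull {a, q, c}) \<or>
         (m3 > 0 \<and> p \<in> convex hull {a, b, q})"
proof -
  obtain l1 l2 l3 where l: "p = l1 *\<^sub>R a + l2 *\<^sub>R b + l3 *\<^sub>R c" "l1 \<ge> 0" "l2 \<ge> 0" "l3 \<ge> 0" "l1 + l2 + l3 = 1"
    using p unfolding convex_hull_3 by blast
  from ratio_cases[OF l(2-4) q(2-5)] show ?thesis
  proof (elim disjE conjE)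
    assume "m1 > 0" "l1 * m2 \<le> l2 * m1" "l1 * m3 \<le> l3 * m1"
    then show ?thesis using exch[OF l(1) q(1) l(2-5) _ q(3-5)] by blast
  next
    assume h: "m2 > 0" "l2 * m1 \<le> l1 * m2" "l2 * m3 \<le> l3 * m2"
    have "p = l2 *\<^sub>R b + l1 *\<^sub>R a + l3 *\<^sub>R c" "q = m2 *\<^sub>R b + m1 *\<^sub>R a + m3 *\<^sub>R c"
      using l(1) q(1) by (simp_all add: algebra_simps)
    from exch[OF this l(3) l(2) l(4) _ h(1) q(2) q(4) _ h(2,3)] l(5) q(5)
    have "p \<in> convex hull {q, a, c}" by (simp add: algebra_simps)
    then show ?thesis using h(1) by (simp add: insert_commute)
  next
    assume h: "m3 > 0" "l3 * m1 \<le> l1 * m3" "l3 * m2 \<le> l2 * m3"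
    have "p = l3 *\<^sub>R c + l1 *\<^sub>R a + l2 *\<^sub>R b" "q = m3 *\<^sub>R c + m1 *\<^sub>R a + m2 *\<^sub>R b"
      using l(1) q(1) by (simp_all add: algebra_simps)
    from exch[OF this l(4) l(2) l(3) _ h(1) q(2) q(3) _ h(2,3)] l(5) q(5)
    have "p \<in> convex hull {q, a, b}" by (simp add: algebra_simps)
    then show ?thesis using h(1) by (simp add: insert_commute)
  qed
qed

lemma subdiv3:
  fixes a b c p q :: "'a::real_vector"
  assumes "p \<in> convex hull {a, b, c}" "q \<in> convex hull {a, b, c}"
  shows "p \<in> convex hull {q, b, c} \<or> p \<in> convex hull {a, q, c} \<or> p \<in> convex hull {a, b, q}"
proof -
  obtain m1 m2 m3 where "q = m1 *\<^sub>R a + m2 *\<^sub>R b + m3 *\<^sub>R c" "m1 \<ge> 0" "m2 \<ge> 0" "m3 \<ge> 0" "m1 + m2 + m3 = 1"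
    using assms(2) unfolding convex_hull_3 by blast
  from subdiv[OF assms(1) this] show ?thesis by blast
qed

lemma edge_split:
  fixes a b c p z :: "'a::real_vector"
  assumes "p \<in> convex hull {a, b, c}" "z \<in> closed_segment a c"
  shows "p \<in> convex hull {z, b, c} \<or> p \<in> convex hull {a, b, z}"
proof -
  obtain s where s: "0 \<le> s" "s \<le> 1" "z = (1 - s) *\<^sub>R a + s *\<^sub>R c"
    using assms(2) unfolding in_segment by blast
  have "z = (1 - s) *\<^sub>R a + 0 *\<^sub>R b + s *\<^sub>R c" using s by simp
  from subdiv[OF assms(1) this] s show ?thesis by auto
qed

lemma both_in:
  fixes u v p q :: "'a::real_vector"
  assumes "p \<in> convex hull {u, v, q}" "q \<in> convex hull {u, v, p}"
  shows "p = q \<or> p \<in> closed_segment u v"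
proof -
  obtain a b c where A: "p = a *\<^sub>R u + b *\<^sub>R v + c *\<^sub>R q" "a \<ge> 0" "b \<ge> 0" "c \<ge> 0" "a + b + c = 1"
    using assms(1) unfolding convex_hull_3 by blast
  obtain a' b' c' where B: "q = a' *\<^sub>R u + b' *\<^sub>R v + c' *\<^sub>R p" "a' \<ge> 0" "b' \<ge> 0" "c' \<ge> 0" "a' + b' + c' = 1"
    using assms(2) unfolding convex_hull_3 by blast
  have eq: "(1 - c * c') *\<^sub>R p = (a + c * a') *\<^sub>R u + (b + c * b') *\<^sub>R v"
  proof -
    have "p = a *\<^sub>R u + b *\<^sub>R v + c *\<^sub>R (a' *\<^sub>R u + b' *\<^sub>R v + c' *\<^sub>R p)" using A(1) B(1) by simp
    then show ?thesis by (simp add: algebra_simps)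
  qed
  show ?thesis
  proof (cases "c * c' = 1")
    case True
    have "c \<le> 1" "c' \<le> 1" using A B by auto
    then have "c = 1" using True A(4) B(4)
      by (smt (verit) mult_left_le mult_right_le_one_le)
    then have "a = 0" "b = 0" using A by auto
    then show ?thesis using A(1) \<open>c = 1\<close> by simp
  next
    case False
    have c1: "c * c' \<le> 1" using A B by (simp add: mult_le_one)
    with False have pos: "1 - c * c' > 0" by simp
    define k where "k = 1 - c * c'"
    have "p = inverse k *\<^sub>R ((1 - c * c') *\<^sub>R p)" using pos by (simp add: k_def)
    also have "\<dots> = inverse k *\<^sub>R ((a + c * a') *\<^sub>R u + (b + c * b') *\<^sub>R v)" using eq by simp
    also have "\<dots> = ((a + c * a') / k) *\<^sub>R u + ((b + c * b') / k) *\<^sub>R v"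
      by (simp add: scaleR_add_right divide_inverse_commute)
    finally have "p = ((a + c * a') / k) *\<^sub>R u + ((b + c * b') / k) *\<^sub>R v" .
    moreover have "(a + c * a') / k + (b + c * b') / k = 1"
    proof -
      have "c * a' + c * b' = c * (1 - c')" using B(5) by (metis add_diff_cancel_right' distrib_left)
      then have "a + c * a' + (b + c * b') = k" unfolding k_def using A(5) by (simp add: algebra_simps)
      then show ?thesis using pos unfolding k_def by (simp add: add_divide_distrib[symmetric])
    qed
    moreover have "(a + c * a') / k \<ge> 0" "(b + c * b') / k \<ge> 0"
      using A B pos unfolding k_def by auto
    ultimately have "p \<in> convex hull {u, v}" unfolding convex_hull_2 by blast
    then show ?thesis by (simp add: segment_convex_hull)
  qed
qed


lemma one_pos:
  fixes x1 x2 x3 x4 :: "'a::real_vector"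
  assumes "a > 0" "b \<le> 0" "c \<le> 0" "d \<le> 0" "a + b + c + d = 0"
    "a *\<^sub>R x1 + b *\<^sub>R x2 + c *\<^sub>R x3 + d *\<^sub>R x4 = 0"
  shows "x1 \<in> convex hull {x2, x3, x4}"
proof -
  have "a *\<^sub>R x1 = (- b) *\<^sub>R x2 + (- c) *\<^sub>R x3 + (- d) *\<^sub>R x4"
    using assms(6) by (simp add: algebra_simps eq_neg_iff_add_eq_0)
  then have "inverse a *\<^sub>R (a *\<^sub>R x1) = inverse a *\<^sub>R ((- b) *\<^sub>R x2 + (- c) *\<^sub>R x3 + (- d) *\<^sub>R x4)"
    by simp
  moreover have "inverse a *\<^sub>R (a *\<^sub>R x1) = x1" using assms(1) by simp
  ultimately have "x1 = (- b / a) *\<^sub>R x2 + (- c / a) *\<^sub>R x3 + (- d / a) *\<^sub>R x4"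
    by (simp only: scaleR_add_right scaleR_scaleR divide_inverse_commute)
  moreover have "- b / a + - c / a + - d / a = 1"
  proof -
    have "- b + - c + - d = a" using assms(5) by simp
    moreover have "- b / a + - c / a + - d / a = (- b + - c + - d) / a" by (simp only: add_divide_distrib)
    ultimately show ?thesis using assms(1) by simp
  qed
  moreover have "- b / a \<ge> 0" "- c / a \<ge> 0" "- d / a \<ge> 0" using assms by (auto simp: divide_nonpos_pos)
  ultimately show ?thesis unfolding convex_hull_3 by blast
qed

lemma two_pos:
  fixes x1 x2 x3 x4 :: "'a::real_vector"
  assumes "a > 0" "b > 0" "c < 0" "d < 0" "a + b + c + d = 0"
    "a *\<^sub>R x1 + b *\<^sub>R x2 + c *\<^sub>R x3 + d *\<^sub>R x4 = 0" "x3 \<noteq> x4"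
  shows "\<exists>z. z \<in> closed_segment x1 x2 \<and> z \<in> open_segment x3 x4"
proof -
  define s where "s = a + b"
  have s0: "s > 0" using assms unfolding s_def by simp
  define z where "z = (1 - b / s) *\<^sub>R x1 + (b / s) *\<^sub>R x2"
  have rel: "a *\<^sub>R x1 + b *\<^sub>R x2 = (- c) *\<^sub>R x3 + (- d) *\<^sub>R x4"
    using assms(6) by (simp add: algebra_simps eq_neg_iff_add_eq_0)
  have e1: "1 - b / s = a / s" using s0 unfolding s_def by (simp add: field_simps)
  have sd: "s + d = - c" using assms(5) unfolding s_def by simp
  have "1 - (- d / s) = (s + d) / s" using s0 by (simp add: field_simps)
  then have e2: "1 - (- d / s) = - c / s" using sd by simp
  have "z = inverse s *\<^sub>R (a *\<^sub>R x1 + b *\<^sub>R x2)"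
    unfolding z_def e1 by (simp add: scaleR_add_right divide_inverse_commute)
  also have "\<dots> = inverse s *\<^sub>R ((- c) *\<^sub>R x3 + (- d) *\<^sub>R x4)" using rel by simp
  also have "\<dots> = (1 - (- d / s)) *\<^sub>R x3 + (- d / s) *\<^sub>R x4"
    unfolding e2 by (simp only: scaleR_add_right scaleR_scaleR divide_inverse_commute)
  finally have zz: "z = (1 - (- d / s)) *\<^sub>R x3 + (- d / s) *\<^sub>R x4" .
  have "b / s \<ge> 0" "b / s \<le> 1" using s0 assms unfolding s_def by auto
  then have "z \<in> closed_segment x1 x2" unfolding in_segment z_def by blast
  moreover have "- d / s > 0" "- d / s < 1" using s0 assms unfolding s_def by (auto simp: field_simps)
  then have "z \<in> open_segment x3 x4" unfolding in_segment using zz assms(7) by blast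
  ultimately show ?thesis by blast
qed


lemma four_cases:
  fixes x1 x2 x3 x4 :: "'a::real_vector"
  assumes s: "a + b + c + d = 0" and nz: "\<not> (a = 0 \<and> b = 0 \<and> c = 0 \<and> d = 0)"
    and rel: "a *\<^sub>R x1 + b *\<^sub>R x2 + c *\<^sub>R x3 + d *\<^sub>R x4 = 0"
    and dist: "x3 \<noteq> x4" "x2 \<noteq> x4" "x2 \<noteq> x3"
  shows "x1 \<in> convex hull {x2, x3, x4} \<or> x2 \<in> convex hull {x1, x3, x4} \<or>
         x3 \<in> convex hull {x1, x2, x4} \<or> x4 \<in> convex hull {x1, x2, x3} \<or>
         (\<exists>z. z \<in> closed_segment x1 x2 \<and> z \<in> open_segment x3 x4) \<or>
         (\<exists>z. z \<in> closed_segment x1 x3 \<and> z \<in> closed_segment x2 x4) \<or>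
         (\<exists>z. z \<in> closed_segment x1 x4 \<and> z \<in> closed_segment x2 x3)"
proof -
  have r1: "b *\<^sub>R x2 + a *\<^sub>R x1 + c *\<^sub>R x3 + d *\<^sub>R x4 = 0"
           "c *\<^sub>R x3 + a *\<^sub>R x1 + b *\<^sub>R x2 + d *\<^sub>R x4 = 0"
           "d *\<^sub>R x4 + a *\<^sub>R x1 + b *\<^sub>R x2 + c *\<^sub>R x3 = 0"
           "a *\<^sub>R x1 + c *\<^sub>R x3 + b *\<^sub>R x2 + d *\<^sub>R x4 = 0"
           "a *\<^sub>R x1 + d *\<^sub>R x4 + b *\<^sub>R x2 + c *\<^sub>R x3 = 0"
    using rel by (simp_all add: algebra_simps)
  have neg: "\<And>a b c d y1 y2 y3 y4. a *\<^sub>R y1 + b *\<^sub>R y2 + c *\<^sub>R y3 + d *\<^sub>R (y4::'a) = 0 \<Longrightarrow>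
     (- a) *\<^sub>R y1 + (- b) *\<^sub>R y2 + (- c) *\<^sub>R y3 + (- d) *\<^sub>R y4 = 0"
  proof -
    fix a b c d and y1 y2 y3 y4 :: 'a
    assume h: "a *\<^sub>R y1 + b *\<^sub>R y2 + c *\<^sub>R y3 + d *\<^sub>R y4 = 0"
    have "(- a) *\<^sub>R y1 + (- b) *\<^sub>R y2 + (- c) *\<^sub>R y3 + (- d) *\<^sub>R y4 =
          - (a *\<^sub>R y1 + b *\<^sub>R y2 + c *\<^sub>R y3 + d *\<^sub>R y4)" by (simp add: algebra_simps)
    then show "(- a) *\<^sub>R y1 + (- b) *\<^sub>R y2 + (- c) *\<^sub>R y3 + (- d) *\<^sub>R y4 = 0" using h by simp
  qed
  have cs: "(a > 0 \<and> b \<le> 0 \<and> c \<le> 0 \<and> d \<le> 0) \<or> (a < 0 \<and> b \<ge> 0 \<and> c \<ge> 0 \<and> d \<ge> 0) \<or>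
        (b > 0 \<and> a \<le> 0 \<and> c \<le> 0 \<and> d \<le> 0) \<or> (b < 0 \<and> a \<ge> 0 \<and> c \<ge> 0 \<and> d \<ge> 0) \<or>
        (c > 0 \<and> a \<le> 0 \<and> b \<le> 0 \<and> d \<le> 0) \<or> (c < 0 \<and> a \<ge> 0 \<and> b \<ge> 0 \<and> d \<ge> 0) \<or>
        (d > 0 \<and> a \<le> 0 \<and> b \<le> 0 \<and> c \<le> 0) \<or> (d < 0 \<and> a \<ge> 0 \<and> b \<ge> 0 \<and> c \<ge> 0) \<or>
        (a > 0 \<and> b > 0 \<and> c < 0 \<and> d < 0) \<or> (a < 0 \<and> b < 0 \<and> c > 0 \<and> d > 0) \<or>
        (a > 0 \<and> c > 0 \<and> b < 0 \<and> d < 0) \<or> (a < 0 \<and> c < 0 \<and> b > 0 \<and> d > 0) \<or>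
        (a > 0 \<and> d > 0 \<and> b < 0 \<and> c < 0) \<or> (a < 0 \<and> d < 0 \<and> b > 0 \<and> c > 0)"
    using s nz by smt
  have s1: "b + a + c + d = 0" "c + a + b + d = 0" "d + a + b + c = 0" "a + c + b + d = 0" "a + d + b + c = 0"
    using s by simp_all
  have s2: "- a + - b + - c + - d = 0" "- b + - a + - c + - d = 0" "- c + - a + - b + - d = 0"
    "- d + - a + - b + - c = 0" "- a + - c + - b + - d = 0" "- a + - d + - b + - c = 0"
    using s by simp_all
  note ic = insert_commute
  from cs show ?thesis
  proof (elim disjE)
    assume h: "a > 0 \<and> b \<le> 0 \<and> c \<le> 0 \<and> d \<le> 0"
    then show ?thesis using one_pos[OF _ _ _ _ s rel] by auto
  next
    assume h: "a < 0 \<and> b \<ge> 0 \<and> c \<ge> 0 \<and> d \<ge> 0"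
    then show ?thesis using one_pos[OF _ _ _ _ s2(1) neg[OF rel]] by auto
  next
    assume h: "b > 0 \<and> a \<le> 0 \<and> c \<le> 0 \<and> d \<le> 0"
    then show ?thesis using one_pos[OF _ _ _ _ s1(1) r1(1)] by auto
  next
    assume h: "b < 0 \<and> a \<ge> 0 \<and> c \<ge> 0 \<and> d \<ge> 0"
    then show ?thesis using one_pos[OF _ _ _ _ s2(2) neg[OF r1(1)]] by auto
  next
    assume h: "c > 0 \<and> a \<le> 0 \<and> b \<le> 0 \<and> d \<le> 0"
    then show ?thesis using one_pos[OF _ _ _ _ s1(2) r1(2)] by auto
  next
    assume h: "c < 0 \<and> a \<ge> 0 \<and> b \<ge> 0 \<and> d \<ge> 0"
    then show ?thesis using one_pos[OF _ _ _ _ s2(3) neg[OF r1(2)]] by auto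
  next
    assume h: "d > 0 \<and> a \<le> 0 \<and> b \<le> 0 \<and> c \<le> 0"
    then show ?thesis using one_pos[OF _ _ _ _ s1(3) r1(3)] by auto
  next
    assume h: "d < 0 \<and> a \<ge> 0 \<and> b \<ge> 0 \<and> c \<ge> 0"
    then show ?thesis using one_pos[OF _ _ _ _ s2(4) neg[OF r1(3)]] by auto
  next
    assume h: "a > 0 \<and> b > 0 \<and> c < 0 \<and> d < 0"
    then show ?thesis using two_pos[OF _ _ _ _ s rel dist(1)] by auto
  next
    assume h: "a < 0 \<and> b < 0 \<and> c > 0 \<and> d > 0"
    then show ?thesis using two_pos[OF _ _ _ _ s2(1) neg[OF rel] dist(1)] by auto
  next
    assume h: "a > 0 \<and> c > 0 \<and> b < 0 \<and> d < 0"
    then show ?thesis using two_pos[OF _ _ _ _ s1(4) r1(4) dist(2)] open_closed_segment by blast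
  next
    assume h: "a < 0 \<and> c < 0 \<and> b > 0 \<and> d > 0"
    then have "\<exists>z. z \<in> closed_segment x1 x3 \<and> z \<in> open_segment x2 x4"
      using two_pos[OF _ _ _ _ s2(5) neg[OF r1(4)] dist(2)] by simp
    then show ?thesis using open_closed_segment by blast
  next
    assume h: "a > 0 \<and> d > 0 \<and> b < 0 \<and> c < 0"
    then show ?thesis using two_pos[OF _ _ _ _ s1(5) r1(5) dist(3)] open_closed_segment by blast
  next
    assume h: "a < 0 \<and> d < 0 \<and> b > 0 \<and> c > 0"
    then have "\<exists>z. z \<in> closed_segment x1 x4 \<and> z \<in> open_segment x2 x3"
      using two_pos[OF _ _ _ _ s2(6) neg[OF r1(5)] dist(3)] by simp
    then show ?thesis using open_closed_segment by blast
  qed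
qed


definition good :: "(real^2) set \<Rightarrow> real^2 \<Rightarrow> real^2 \<Rightarrow> real^2 \<Rightarrow> bool" where
  "good P u v p \<longleftrightarrow> p \<in> P \<and> p \<noteq> u \<and> p \<noteq> v \<and> p \<in> convex hull (P - {p}) \<and>
     p \<notin> convex hull (P - {u} - {p}) \<and> p \<notin> convex hull (P - {v} - {p})"

lemma good_noU:
  assumes "good P u v p" "S \<subseteq> P - {u} - {p}" "p \<in> convex hull S" shows False
  using assms hull_mono unfolding good_def by blast

lemma good_noV:
  assumes "good P u v p" "S \<subseteq> P - {v} - {p}" "p \<in> convex hull S" shows False
  using assms hull_mono unfolding good_def by blast

lemma sub3:
  assumes "a \<in> convex hull T" "b \<in> convex hull T" "c \<in> convex hull T"
  shows "convex hull {a, b, c} \<subseteq> convex hull T"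
  using assms by (intro convex_hull_subset) auto

lemma tri_exists:
  fixes P :: "(real^2) set"
  assumes segc: "\<And>x a b. x \<in> P \<Longrightarrow> a \<in> P \<Longrightarrow> b \<in> P \<Longrightarrow> x \<noteq> a \<Longrightarrow> x \<noteq> b \<Longrightarrow> a \<noteq> b \<Longrightarrow> x \<notin> closed_segment a b"
    and "u \<in> P" "v \<in> P" "u \<noteq> v" and g: "good P u v p"
  shows "\<exists>w. w \<in> P \<and> w \<noteq> p \<and> w \<noteq> u \<and> w \<noteq> v \<and> p \<in> convex hull {u, v, w}"
proof -
  have gp: "p \<in> P" "p \<noteq> u" "p \<noteq> v" "p \<in> convex hull (P - {p})" using g unfolding good_def by auto
  have "\<exists>T. finite T \<and> T \<subseteq> P - {p} \<and> card T \<le> DIM(real^2) + 1 \<and> p \<in> convex hull T"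
    using gp(4) by (subst (asm) caratheodory) (simp only: mem_Collect_eq)
  then obtain T where T: "finite T" "T \<subseteq> P - {p}" "card T \<le> DIM(real^2) + 1" "p \<in> convex hull T"
    by blast
  have c3: "card T \<le> 3" using T(3) by simp
  have uT: "u \<in> T"
  proof (rule ccontr)
    assume "u \<notin> T" then have "T \<subseteq> P - {u} - {p}" using T(2) by auto
    then show False using good_noU[OF g _ T(4)] by blast
  qed
  have vT: "v \<in> T"
  proof (rule ccontr)
    assume "v \<notin> T" then have "T \<subseteq> P - {v} - {p}" using T(2) by auto
    then show False using good_noV[OF g _ T(4)] by blast
  qed
  have cT: "card (T - {u, v}) = card T - 2" using uT vT \<open>u \<noteq> v\<close> T(1) by (simp add: card_Diff_subset)
  show ?thesis
  proof (cases "T - {u, v} = {}")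
    case True
    then have "T = {u, v}" using uT vT by auto
    then have "p \<in> closed_segment u v" using T(4) by (simp add: segment_convex_hull)
    with segc[OF gp(1) assms(2,3) gp(2,3) assms(4)] show ?thesis by blast
  next
    case False
    then obtain w where w: "w \<in> T - {u, v}" by blast
    have "card (T - {u, v}) \<le> Suc 0" using cT c3 by simp
    then have "\<forall>a\<in>T - {u, v}. \<forall>b\<in>T - {u, v}. a = b"
      using card_le_Suc0_iff_eq[of "T - {u, v}"] T(1) by blast
    then have "T - {u, v} = {w}" using w by blast
    then have "T = {u, v, w}" using uT vT by blast
    then have "p \<in> convex hull {u, v, w}" using T(4) by simp
    moreover have "w \<in> P" "w \<noteq> p" "w \<noteq> u" "w \<noteq> v" using w T(2) by auto
    ultimately show ?thesis by blast
  qed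
qed

lemma caseA:
  fixes P :: "(real^2) set"
  assumes segc: "\<And>x a b. x \<in> P \<Longrightarrow> a \<in> P \<Longrightarrow> b \<in> P \<Longrightarrow> x \<noteq> a \<Longrightarrow> x \<noteq> b \<Longrightarrow> a \<noteq> b \<Longrightarrow> x \<notin> closed_segment a b"
    and uv: "u \<in> P" "v \<in> P" "u \<noteq> v" and gp: "good P u v p" and gq: "good P u v q" and pq: "p \<noteq> q"
    and w: "w \<in> P" "w \<noteq> p" "w \<noteq> u" "w \<noteq> v" and w': "w' \<in> P" "w' \<noteq> q" "w' \<noteq> u" "w' \<noteq> v"
    and pw: "p \<in> convex hull {u, v, w}" and qw': "q \<in> convex hull {u, v, w'}" and qw: "q \<in> convex hull {u, v, w}"
  shows False
proof -
  have p: "p \<in> P" "p \<noteq> u" "p \<noteq> v" and q: "q \<in> P" "q \<noteq> u" "q \<noteq> v" using gp gq unfolding good_def by auto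
  from subdiv3[OF pw qw] show False
  proof (elim disjE)
    assume h: "p \<in> convex hull {q, v, w}"
    have "{q, v, w} \<subseteq> P - {u} - {p}" using q p uv w pq by blast
    from good_noU[OF gp this h] show False .
  next
    assume h: "p \<in> convex hull {u, q, w}"
    have "{u, q, w} \<subseteq> P - {v} - {p}" using q p uv w pq by blast
    from good_noV[OF gp this h] show False .
  next
    assume puvq: "p \<in> convex hull {u, v, q}"
    have "convex hull {u, v, q} \<subseteq> convex hull {u, v, w'}" using qw' by (intro sub3) (auto intro: hull_inc)
    then have pw': "p \<in> convex hull {u, v, w'}" using puvq by blast
    from subdiv3[OF qw' pw'] show False
    proof (elim disjE)
      assume h: "q \<in> convex hull {p, v, w'}"
      have "{p, v, w'} \<subseteq> P - {u} - {q}" using q p uv w' pq by blast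
      from good_noU[OF gq this h] show False .
    next
      assume h: "q \<in> convex hull {u, p, w'}"
      have "{u, p, w'} \<subseteq> P - {v} - {q}" using q p uv w' pq by blast
      from good_noV[OF gq this h] show False .
    next
      assume "q \<in> convex hull {u, v, p}"
      from both_in[OF puvq this] show False using pq segc[OF p(1) uv(1,2) p(2,3) uv(3)] by blast
    qed
  qed
qed


lemma core:
  fixes P :: "(real^2) set"
  assumes fin: "finite P"
    and segc: "\<And>x a b. x \<in> P \<Longrightarrow> a \<in> P \<Longrightarrow> b \<in> P \<Longrightarrow> x \<noteq> a \<Longrightarrow> x \<noteq> b \<Longrightarrow> a \<noteq> b \<Longrightarrow> x \<notin> closed_segment a b"
    and uv: "u \<in> P" "v \<in> P" "u \<noteq> v"
    and uh: "u \<notin> convex hull (P - {u})" and vh: "v \<notin> convex hull (P - {v})"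
    and face: "closed_segment u v face_of convex hull P"
    and gp: "good P u v p" and gq: "good P u v q" and pq: "p \<noteq> q"
  shows False
proof -
  have p: "p \<in> P" "p \<noteq> u" "p \<noteq> v" and q: "q \<in> P" "q \<noteq> u" "q \<noteq> v" using gp gq unfolding good_def by auto
  obtain w where w: "w \<in> P" "w \<noteq> p" "w \<noteq> u" "w \<noteq> v" and pw: "p \<in> convex hull {u, v, w}"
    using tri_exists[OF segc uv gp] by blast
  obtain w' where w': "w' \<in> P" "w' \<noteq> q" "w' \<noteq> u" "w' \<noteq> v" and qw': "q \<in> convex hull {u, v, w'}"
    using tri_exists[OF segc uv gq] by blast
  have nqw: "q \<notin> convex hull {u, v, w}"
    using caseA[OF segc uv gp gq pq w w' pw qw'] by blast
  have npw': "p \<notin> convex hull {u, v, w'}"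
    using caseA[OF segc uv gq gp pq[symmetric] w' w qw' pw] by blast
  have ww': "w \<noteq> w'" using pw npw' by blast
  have wq: "w \<noteq> q"
  proof
    assume "w = q" then have "q \<in> convex hull {u, v, w}" by (simp add: hull_inc)
    with nqw show False by blast
  qed
  have w'p: "w' \<noteq> p"
  proof
    assume "w' = p" then have "p \<in> convex hull {u, v, w'}" by (simp add: hull_inc)
    with npw' show False by blast
  qed
  define S where "S = {u, v, w, w'}"
  have finS: "finite S" unfolding S_def by simp
  have cS: "card S = 4" unfolding S_def using uv w w' ww' by auto
  have "affine_dependent S" using affine_dependent_biggerset[OF finS] cS by simp
  then obtain U where U: "sum U S = 0" "\<exists>x\<in>S. U x \<noteq> 0" "(\<Sum>x\<in>S. U x *\<^sub>R x) = 0"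
    using affine_dependent_explicit_finite[OF finS] by blast
  have U1: "U u + U v + U w + U w' = 0" using U(1) uv w w' ww' unfolding S_def by (simp add: add.assoc)
  have U2: "U u *\<^sub>R u + U v *\<^sub>R v + U w *\<^sub>R w + U w' *\<^sub>R w' = 0"
    using U(3) uv w w' ww' unfolding S_def by (simp add: add.assoc)
  have U3: "\<not> (U u = 0 \<and> U v = 0 \<and> U w = 0 \<and> U w' = 0)" using U(2) unfolding S_def by blast
  have noUp: "\<And>T. T \<subseteq> P - {u} - {p} \<Longrightarrow> p \<in> convex hull T \<Longrightarrow> False" using good_noU[OF gp] by blast
  have noVp: "\<And>T. T \<subseteq> P - {v} - {p} \<Longrightarrow> p \<in> convex hull T \<Longrightarrow> False" using good_noV[OF gp] by blast
  from four_cases[OF U1 U3 U2 ww' w'(4)[symmetric] w(4)[symmetric]] show False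
  proof (elim disjE)
    assume "u \<in> convex hull {v, w, w'}"
    moreover have "{v, w, w'} \<subseteq> P - {u}" using uv w w' by blast
    ultimately show False using uh hull_mono by blast
  next
    assume "v \<in> convex hull {u, w, w'}"
    moreover have "{u, w, w'} \<subseteq> P - {v}" using uv w w' by blast
    ultimately show False using vh hull_mono by blast
  next
    assume "w \<in> convex hull {u, v, w'}"
    then have "convex hull {u, v, w} \<subseteq> convex hull {u, v, w'}" by (intro sub3) (auto intro: hull_inc)
    then show False using pw npw' by blast
  next
    assume "w' \<in> convex hull {u, v, w}"
    then have "convex hull {u, v, w'} \<subseteq> convex hull {u, v, w}" by (intro sub3) (auto intro: hull_inc)
    then show False using qw' nqw by blast
  next
    assume "\<exists>z. z \<in> closed_segment u v \<and> z \<in> open_segment w w'"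
    then obtain z where z: "z \<in> closed_segment u v" "z \<in> open_segment w w'" by blast
    have "w \<in> convex hull P" "w' \<in> convex hull P" using w w' by (auto intro: hull_inc)
    from face_ofD[OF face z(2) this z(1)] have "w \<in> closed_segment u v" by blast
    then show False using segc[OF w(1) uv(1,2) w(3,4) uv(3)] by blast
  next
    assume "\<exists>z. z \<in> closed_segment u w \<and> z \<in> closed_segment v w'"
    then obtain z where z: "z \<in> closed_segment u w" "z \<in> closed_segment v w'" by blast
    have zs: "z \<in> convex hull {v, w'}" using z(2) by (simp add: segment_convex_hull)
    from edge_split[OF pw z(1)] show False
    proof
      assume h: "p \<in> convex hull {z, v, w}"
      have "z \<in> convex hull {w', v, w}" using zs hull_mono[of "{v, w'}" "{w', v, w}"] by blast
      then have "convex hull {z, v, w} \<subseteq> convex hull {w', v, w}" by (intro sub3) (auto intro: hull_inc)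
      moreover have "{w', v, w} \<subseteq> P - {u} - {p}" using uv w w' w'p p by blast
      ultimately show False using h noUp by blast
    next
      assume h: "p \<in> convex hull {u, v, z}"
      have "z \<in> convex hull {u, v, w'}" using zs hull_mono[of "{v, w'}" "{u, v, w'}"] by blast
      then have "convex hull {u, v, z} \<subseteq> convex hull {u, v, w'}" by (intro sub3) (auto intro: hull_inc)
      then show False using h npw' by blast
    qed
  next
    assume "\<exists>z. z \<in> closed_segment u w' \<and> z \<in> closed_segment v w"
    then obtain z where z: "z \<in> closed_segment u w'" "z \<in> closed_segment v w" by blast
    have zs: "z \<in> convex hull {u, w'}" using z(1) by (simp add: segment_convex_hull)
    have pw2: "p \<in> convex hull {v, u, w}" using pw by (simp add: insert_commute)
    from edge_split[OF pw2 z(2)] show False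
    proof
      assume h: "p \<in> convex hull {z, u, w}"
      have "z \<in> convex hull {u, w', w}" using zs hull_mono[of "{u, w'}" "{u, w', w}"] by blast
      then have "convex hull {z, u, w} \<subseteq> convex hull {u, w', w}" by (intro sub3) (auto intro: hull_inc)
      moreover have "{u, w', w} \<subseteq> P - {v} - {p}" using uv w w' w'p p by blast
      ultimately show False using h noVp by blast
    next
      assume h: "p \<in> convex hull {v, u, z}"
      have "z \<in> convex hull {u, v, w'}" using zs hull_mono[of "{u, w'}" "{u, v, w'}"] by blast
      then have "convex hull {v, u, z} \<subseteq> convex hull {u, v, w'}" by (intro sub3) (auto intro: hull_inc)
      then show False using h npw' by blast
    qed
  qed
qed


theorem lemma1:
  fixes P :: "(real^2) set" and u v :: "real^2"
  assumes "finite P"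
    and "general_position P"
    and "adjacent_hull_vertices P u v"
  shows "card (active P u \<inter> active P v) \<le> 1"
proof -
  have adj: "u \<in> layer1 P" "v \<in> layer1 P" "u \<noteq> v" "closed_segment u v face_of convex hull P"
    using assms(3) unfolding adjacent_hull_vertices_def by auto
  have uv: "u \<in> P" "v \<in> P" "u \<notin> convex hull (P - {u})" "v \<notin> convex hull (P - {v})"
    using adj(1,2) unfolding layer1_def hull_vertices_def by auto
  have gpP: "\<And>a b c. a \<in> P \<Longrightarrow> b \<in> P \<Longrightarrow> c \<in> P \<Longrightarrow> a \<noteq> b \<Longrightarrow> a \<noteq> c \<Longrightarrow> b \<noteq> c \<Longrightarrow> \<not> collinear {a, b, c}"
    using assms(2) unfolding general_position_def by blast
  have segc: "x \<notin> closed_segment a b"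
    if "x \<in> P" "a \<in> P" "b \<in> P" "x \<noteq> a" "x \<noteq> b" "a \<noteq> b" for x a b
  proof
    assume "x \<in> closed_segment a b"
    then have "collinear {a, x, b}" by (intro between_imp_collinear) (simp add: between_mem_segment)
    moreover have "\<not> collinear {a, x, b}"
      using gpP[OF that(2) that(1) that(3)] that(4,5,6) by blast
    ultimately show False by blast
  qed
  have goodI: "good P u v p" if "p \<in> active P u \<inter> active P v" for p
  proof -
    have a: "p \<in> layer2 P" "p \<in> layer1 (P - {u})" "p \<in> layer1 (P - {v})"
      using that unfolding active_def by auto
    have b: "p \<in> P" "p \<notin> layer1 P" using a(1) unfolding layer2_def hull_vertices_def by auto
    have c: "p \<in> convex hull (P - {p})" using b unfolding layer1_def hull_vertices_def by auto
    have d: "p \<notin> convex hull (P - {u} - {p})" "p \<notin> convex hull (P - {v} - {p})"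
      using a(2,3) unfolding layer1_def hull_vertices_def by auto
    have e: "p \<noteq> u" "p \<noteq> v" using b(2) adj(1,2) by auto
    show ?thesis unfolding good_def using b(1) c d e by blast
  qed
  have fin: "finite (active P u \<inter> active P v)"
  proof (rule finite_subset[OF _ assms(1)])
    show "active P u \<inter> active P v \<subseteq> P"
      unfolding active_def layer2_def hull_vertices_def by auto
  qed
  have "\<forall>a\<in>active P u \<inter> active P v. \<forall>b\<in>active P u \<inter> active P v. a = b"
  proof (intro ballI)
    fix a b assume ab: "a \<in> active P u \<inter> active P v" "b \<in> active P u \<inter> active P v"
    show "a = b"
    proof (rule ccontr)
      assume "a \<noteq> b"
      from core[OF assms(1) segc uv(1,2) adj(3) uv(3,4) adj(4) goodI[OF ab(1)] goodI[OF ab(2)] this]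
      show False .
    qed
  qed
  then show ?thesis using card_le_Suc0_iff_eq[OF fin] by simp
qed

end
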